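(* Let $(e_n)$ be a seminormalized quasisubsymmetric basic sequence in a Banach space. Then there exists a constant $S>0$ such that for any two increasing sequences $(k_n)$ and $(\ell_n)$ of positive integers with $k_n\le \ell_n$ for all $n$, we have $$\Big\|\sum_n a_n e_{\ell_n}\Big\|\le S\Big\|\sum_n a_n e_{k_n}\Big\|\quad\text{for all }(a_n)\in c_{00}.$$
   Context: $c_{00}$ denotes the space of finitely supported scalar sequences. A sequence $(e_n)$ is seminormalized if $0<\inf_n\|e_n\|\le\sup_n\|e_n\|<\infty$. For basic sequences $(x_n),(y_n)$ and $C>0$, $(x_n)$ $C$-dominates $(y_n)$ if $\|\sum a_ny_n\|\le C\|\sum a_nx_n\|$ for all $(a_n)\in c_{00}$; $(x_n)$ dominates $(y_n)$ if it $C$-dominates it for some $C>0$. A basic sequence $(e_n)$ is quasisubsymmetric if for any two increasing sequences $(k_n)$ and $(\ell_n)$ of positive integers with $k_n\le\ell_n$ for all $n$, $(e_{k_n})$ dominates $(e_{\ell_n})$ (with a constant that may depend on the two sequences). *)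

theory Defs
  imports "HOL-Analysis.Analysis"
begin

text \<open>Real Banach spaces; sequences indexed by nat (index 0 plays the role of 1).\<close>

definition schauder_basis_of :: "(nat \<Rightarrow> 'a::real_normed_vector) \<Rightarrow> 'a set \<Rightarrow> bool" where
  "schauder_basis_of e X \<longleftrightarrow> range e \<subseteq> X \<and>
     (\<forall>x\<in>X. \<exists>!a::nat \<Rightarrow> real. (\<lambda>n. \<Sum>i<n. a i *\<^sub>R e i) \<longlonglongrightarrow> x)"

definition basic_sequence :: "(nat \<Rightarrow> 'a::real_normed_vector) \<Rightarrow> bool" where
  "basic_sequence e \<longleftrightarrow> schauder_basis_of e (closure (span (range e)))"

definition seminormalized :: "(nat \<Rightarrow> 'a::real_normed_vector) \<Rightarrow> bool" where
  "seminormalized e \<longleftrightarrow> 0 < (INF n. norm (e n)) \<and> bdd_above (range (\<lambda>n. norm (e n)))"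

text \<open>x C-dominates y; finitely supported coefficient sequences are those vanishing from some N on,
  so it suffices to quantify over all coefficient functions and all truncation lengths N.\<close>
definition dominates_with :: "real \<Rightarrow> (nat \<Rightarrow> 'a::real_normed_vector) \<Rightarrow> (nat \<Rightarrow> 'a) \<Rightarrow> bool" where
  "dominates_with C x y \<longleftrightarrow>
     (\<forall>(a::nat \<Rightarrow> real) N. norm (\<Sum>n<N. a n *\<^sub>R y n) \<le> C * norm (\<Sum>n<N. a n *\<^sub>R x n))"

definition dominates :: "(nat \<Rightarrow> 'a::real_normed_vector) \<Rightarrow> (nat \<Rightarrow> 'a) \<Rightarrow> bool" where
  "dominates x y \<longleftrightarrow> (\<exists>C>0. dominates_with C x y)"

definition quasisubsymmetric :: "(nat \<Rightarrow> 'a::real_normed_vector) \<Rightarrow> bool" where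
  "quasisubsymmetric e \<longleftrightarrow> basic_sequence e \<and>
     (\<forall>k l::nat \<Rightarrow> nat. strict_mono k \<and> strict_mono l \<and> (\<forall>n. k n \<le> l n) \<longrightarrow>
        dominates (e \<circ> k) (e \<circ> l))"

end

theory Submission
  imports Defs
begin

locale bseq =
  fixes e :: "nat \<Rightarrow> 'a::banach"
  assumes basic: "basic_sequence e"
begin

definition Y where "Y = closure (span (range e))"
definition cf :: "'a \<Rightarrow> nat \<Rightarrow> real" where
  "cf x = (THE a. (\<lambda>n. \<Sum>i<n. a i *\<^sub>R e i) \<longlonglongrightarrow> x)"
definition P :: "nat \<Rightarrow> 'a \<Rightarrow> 'a" where
  "P n x = (\<Sum>i<n. cf x i *\<^sub>R e i)"

lemma ex1: "x \<in> Y \<Longrightarrow> \<exists>!a::nat \<Rightarrow> real. (\<lambda>n. \<Sum>i<n. a i *\<^sub>R e i) \<longlonglongrightarrow> x"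
  using basic unfolding basic_sequence_def schauder_basis_of_def Y_def by blast

lemma P_lim: "x \<in> Y \<Longrightarrow> (\<lambda>n. P n x) \<longlonglongrightarrow> x"
  unfolding P_def cf_def using theI'[OF ex1] by blast

lemma cf_unique: "x \<in> Y \<Longrightarrow> (\<lambda>n. \<Sum>i<n. a i *\<^sub>R e i) \<longlonglongrightarrow> x \<Longrightarrow> cf x = a"
  using ex1 P_lim unfolding P_def by blast

lemma Y_closed: "closed Y" unfolding Y_def by simp

lemma fin_span: "(\<Sum>i<n. b i *\<^sub>R e i) \<in> span (range e)"
  by (rule span_sum, rule span_scale, rule span_base) simp

lemma Y_add: "x \<in> Y \<Longrightarrow> y \<in> Y \<Longrightarrow> x + y \<in> Y"
proof -
  assume x: "x \<in> Y" and y: "y \<in> Y"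
  have lim: "(\<lambda>n. P n x + P n y) \<longlonglongrightarrow> x + y" using P_lim[OF x] P_lim[OF y] by (rule tendsto_add)
  have mem: "P n x + P n y \<in> Y" for n
    unfolding Y_def P_def
    by (rule subsetD[OF closure_subset], rule span_add[OF fin_span fin_span])
  show ?thesis by (rule closed_sequentially[OF Y_closed mem lim])
qed

lemma Y_scale: "x \<in> Y \<Longrightarrow> c *\<^sub>R x \<in> Y"
proof -
  assume x: "x \<in> Y"
  have lim: "(\<lambda>n. c *\<^sub>R P n x) \<longlonglongrightarrow> c *\<^sub>R x" using P_lim[OF x] by (intro tendsto_scaleR tendsto_const)
  have mem: "c *\<^sub>R P n x \<in> Y" for n
    unfolding Y_def P_def
    by (rule subsetD[OF closure_subset], rule span_scale[OF fin_span])
  show ?thesis by (rule closed_sequentially[OF Y_closed mem lim])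
qed

lemma Y_fin: "(\<Sum>i<M. b i *\<^sub>R e i) \<in> Y"
  unfolding Y_def by (rule subsetD[OF closure_subset], rule fin_span)

lemma Y_0: "0 \<in> Y" using Y_fin[where M=0] by simp

lemma Y_diff: "x \<in> Y \<Longrightarrow> y \<in> Y \<Longrightarrow> x - y \<in> Y"
  using Y_add Y_scale[of y "-1"] by (metis scaleR_minus1_left diff_conv_add_uminus)

lemma cf_add: "x \<in> Y \<Longrightarrow> y \<in> Y \<Longrightarrow> cf (x + y) = (\<lambda>i. cf x i + cf y i)"
proof -
  assume x: "x \<in> Y" and y: "y \<in> Y"
  have "(\<lambda>n. P n x + P n y) \<longlonglongrightarrow> x + y" using P_lim[OF x] P_lim[OF y] by (rule tendsto_add)
  moreover have "P n x + P n y = (\<Sum>i<n. (cf x i + cf y i) *\<^sub>R e i)" for n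
    unfolding P_def by (simp add: sum.distrib scaleR_add_left)
  ultimately show ?thesis using cf_unique[OF Y_add[OF x y]] by simp
qed

lemma cf_scale: "x \<in> Y \<Longrightarrow> cf (c *\<^sub>R x) = (\<lambda>i. c * cf x i)"
proof -
  assume x: "x \<in> Y"
  have "(\<lambda>n. c *\<^sub>R P n x) \<longlonglongrightarrow> c *\<^sub>R x" using P_lim[OF x] by (intro tendsto_scaleR tendsto_const)
  moreover have "c *\<^sub>R P n x = (\<Sum>i<n. (c * cf x i) *\<^sub>R e i)" for n
    unfolding P_def by (simp add: scaleR_sum_right)
  ultimately show ?thesis using cf_unique[OF Y_scale[OF x]] by simp
qed

lemma cf_fin: "cf (\<Sum>i<M. b i *\<^sub>R e i) = (\<lambda>i. if i < M then b i else 0)"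
proof (rule cf_unique[OF Y_fin])
  have "eventually (\<lambda>n. (\<Sum>i<n. (if i < M then b i else 0) *\<^sub>R e i) = (\<Sum>i<M. b i *\<^sub>R e i)) sequentially"
  proof (rule eventually_sequentiallyI[of M])
    fix n assume "M \<le> n"
    have "(\<Sum>i<n. (if i < M then b i else 0) *\<^sub>R e i) = (\<Sum>i<M. (if i < M then b i else 0) *\<^sub>R e i)"
      by (rule sum.mono_neutral_right) (use \<open>M \<le> n\<close> in auto)
    then show "(\<Sum>i<n. (if i < M then b i else 0) *\<^sub>R e i) = (\<Sum>i<M. b i *\<^sub>R e i)" by simp
  qed
  then show "(\<lambda>n. \<Sum>i<n. (if i < M then b i else 0) *\<^sub>R e i) \<longlonglongrightarrow> (\<Sum>i<M. b i *\<^sub>R e i)"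
    by (rule tendsto_eventually)
qed

lemma P_add: "x \<in> Y \<Longrightarrow> y \<in> Y \<Longrightarrow> P n (x + y) = P n x + P n y"
  unfolding P_def by (simp add: cf_add sum.distrib scaleR_add_left)

lemma P_scale: "x \<in> Y \<Longrightarrow> P n (c *\<^sub>R x) = c *\<^sub>R P n x"
  unfolding P_def by (simp add: cf_scale scaleR_sum_right)

lemma P_0: "P n 0 = 0"
  using P_scale[OF Y_0, of n 0] by simp

definition tn :: "'a \<Rightarrow> real" where "tn x = (SUP n. norm (P n x))"

lemma tn_bdd: "x \<in> Y \<Longrightarrow> bdd_above (range (\<lambda>n. norm (P n x)))"
proof -
  assume x: "x \<in> Y"
  have "Bseq (\<lambda>n. P n x)" using P_lim[OF x] by (intro convergent_imp_Bseq convergentI)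
  then obtain K where "\<And>n. norm (P n x) \<le> K" unfolding Bseq_def by blast
  then show ?thesis by (intro bdd_aboveI) auto
qed

lemma P_le_tn: "x \<in> Y \<Longrightarrow> norm (P n x) \<le> tn x"
  unfolding tn_def by (rule cSUP_upper[OF _ tn_bdd]) auto

lemma tn_nonneg: "x \<in> Y \<Longrightarrow> 0 \<le> tn x"
  using P_le_tn[of x 0] by (meson norm_ge_zero order_trans)

lemma norm_le_tn: "x \<in> Y \<Longrightarrow> norm x \<le> tn x"
proof -
  assume x: "x \<in> Y"
  have "(\<lambda>n. norm (P n x)) \<longlonglongrightarrow> norm x" using P_lim[OF x] by (rule tendsto_norm)
  then show ?thesis by (rule LIMSEQ_le_const2) (use P_le_tn[OF x] in auto)
qed

lemma tn_add: "x \<in> Y \<Longrightarrow> y \<in> Y \<Longrightarrow> tn (x + y) \<le> tn x + tn y"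
  unfolding tn_def[of "x+y"]
proof (rule cSUP_least)
  fix n assume x: "x \<in> Y" and y: "y \<in> Y"
  have "norm (P n (x + y)) \<le> norm (P n x) + norm (P n y)" by (simp add: P_add x y norm_triangle_ineq)
  also have "\<dots> \<le> tn x + tn y" using P_le_tn[OF x] P_le_tn[OF y] by (intro add_mono)
  finally show "norm (P n (x + y)) \<le> tn x + tn y" .
qed auto

lemma tn_scale: "x \<in> Y \<Longrightarrow> tn (c *\<^sub>R x) \<le> \<bar>c\<bar> * tn x"
  unfolding tn_def[of "c *\<^sub>R x"]
proof (rule cSUP_least)
  fix n assume x: "x \<in> Y"
  show "norm (P n (c *\<^sub>R x)) \<le> \<bar>c\<bar> * tn x"
    using P_le_tn[OF x, of n] by (simp add: P_scale x mult_left_mono)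
qed auto

lemma tn_0: "tn 0 = 0"
  unfolding tn_def by (simp add: P_0)

lemma cf_bound: "x \<in> Y \<Longrightarrow> \<bar>cf x i\<bar> * norm (e i) \<le> 2 * tn x"
proof -
  assume x: "x \<in> Y"
  have "cf x i *\<^sub>R e i = P (Suc i) x - P i x" unfolding P_def by simp
  then have "\<bar>cf x i\<bar> * norm (e i) = norm (P (Suc i) x - P i x)" by (metis norm_scaleR)
  also have "\<dots> \<le> norm (P (Suc i) x) + norm (P i x)" by (rule norm_triangle_ineq4)
  also have "\<dots> \<le> 2 * tn x" using P_le_tn[OF x, of "Suc i"] P_le_tn[OF x, of i] by simp
  finally show ?thesis .
qed


lemma tn_series:
  assumes z: "\<And>j. z j \<in> Y" and sm: "summable (\<lambda>j. tn (z j))" and zs: "z sums y" and y: "y \<in> Y"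
    and enz: "\<And>i. e i \<noteq> 0"
  shows "tn y \<le> (\<Sum>j. tn (z j))"
proof -
  define d where "d i = (\<Sum>j. cf (z j) i)" for i
  have smc: "summable (\<lambda>j. cf (z j) i)" for i
  proof (rule summable_comparison_test)
    show "summable (\<lambda>j. 2 / norm (e i) * tn (z j))" using sm by (rule summable_mult)
    show "\<exists>N. \<forall>n\<ge>N. norm (cf (z n) i) \<le> 2 / norm (e i) * tn (z n)"
    proof (intro exI allI impI)
      fix n
      have "\<bar>cf (z n) i\<bar> * norm (e i) \<le> 2 * tn (z n)" by (rule cf_bound[OF z])
      then show "norm (cf (z n) i) \<le> 2 / norm (e i) * tn (z n)"
        using enz[of i] by (simp add: field_simps)
    qed
  qed
  define Q where "Q n = (\<Sum>i<n. d i *\<^sub>R e i)" for n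
  have Qs: "(\<lambda>j. P n (z j)) sums Q n" for n
    unfolding P_def Q_def
    by (intro sums_sum sums_scaleR_left) (simp add: d_def summable_sums[OF smc])
  have sm2: "summable (\<lambda>j. 2 * tn (z j))" using sm by (rule summable_mult)
  have gb: "norm (P n (z j) - z j) \<le> 2 * tn (z j)" for n j
  proof -
    have "norm (P n (z j) - z j) \<le> norm (P n (z j)) + norm (z j)" by (rule norm_triangle_ineq4)
    also have "\<dots> \<le> 2 * tn (z j)" using P_le_tn[OF z, of n j] norm_le_tn[OF z, of j] by simp
    finally show ?thesis .
  qed
  have tan: "(\<lambda>n. \<Sum>j. norm (P n (z j) - z j)) \<longlonglongrightarrow> (\<Sum>j. (0::real))"
  proof -
    have "eventually (\<lambda>n. summable (\<lambda>k. norm (norm (P n (z k) - z k)))) sequentially \<and>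
          summable (\<lambda>n. norm (0::real)) \<and>
          ((\<lambda>n. \<Sum>k. norm (P n (z k) - z k)) \<longlongrightarrow> (\<Sum>k. (0::real))) sequentially"
    proof (rule tannerys_theorem[where M = "\<lambda>j. 2 * tn (z j)"])
      fix k
      have "(\<lambda>n. P n (z k) - z k) \<longlonglongrightarrow> 0" using P_lim[OF z] by (rule LIM_zero)
      then show "(\<lambda>n. norm (P n (z k) - z k)) \<longlonglongrightarrow> 0" by (rule tendsto_norm_zero)
    next
      show "\<forall>\<^sub>F (k, n) in sequentially \<times>\<^sub>F sequentially. norm (norm (P n (z k) - z k)) \<le> 2 * tn (z k)"
        by (rule always_eventually) (auto simp: gb)
    qed (use sm2 in auto)
    then show ?thesis by blast
  qed
  have Qy: "Q \<longlonglongrightarrow> y"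
  proof (rule LIM_zero_cancel, rule Lim_null_comparison)
    show "\<forall>\<^sub>F n in sequentially. norm (Q n - y) \<le> (\<Sum>j. norm (P n (z j) - z j))"
    proof (rule always_eventually, rule allI)
      fix n
      have "(\<lambda>j. P n (z j) - z j) sums (Q n - y)" using Qs zs by (rule sums_diff)
      then have "Q n - y = (\<Sum>j. P n (z j) - z j)" by (simp add: sums_iff)
      moreover have "summable (\<lambda>j. norm (P n (z j) - z j))"
        by (rule summable_comparison_test[OF _ sm2]) (auto simp: gb)
      ultimately show "norm (Q n - y) \<le> (\<Sum>j. norm (P n (z j) - z j))"
        by (simp add: summable_norm)
    qed
    show "(\<lambda>n. \<Sum>j. norm (P n (z j) - z j)) \<longlonglongrightarrow> 0" using tan by simp
  qed
  have cfy: "cf y = d" using cf_unique[OF y] Qy unfolding Q_def by blast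
  show ?thesis
    unfolding tn_def[of y]
  proof (rule cSUP_least)
    fix n
    have "P n y = Q n" unfolding P_def Q_def cfy ..
    also have "\<dots> = (\<Sum>j. P n (z j))" using Qs by (simp add: sums_iff)
    finally have "norm (P n y) = norm (\<Sum>j. P n (z j))" by simp
    also have "\<dots> \<le> (\<Sum>j. tn (z j))" by (rule norm_suminf_le[OF P_le_tn[OF z] sm])
    finally show "norm (P n y) \<le> (\<Sum>j. tn (z j))" .
  qed auto
qed

end

context bseq begin
lemma approx_bound:
  "\<exists>A0\<ge>0. \<forall>y\<in>Y. \<forall>\<delta>>0. \<exists>w\<in>Y. tn w \<le> A0 * norm y \<and> norm (y - w) < \<delta>"
proof -
  define X where "X = top_of_set Y"
  define B where "B K = closure {x\<in>Y. tn x \<le> real K}" for K :: nat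
  have cm: "completely_metrizable_space X"
    unfolding X_def
    by (rule completely_metrizable_space_closedin[OF completely_metrizable_space_euclidean])
       (simp add: Y_closed)
  have BY: "B K \<subseteq> Y" for K
    unfolding B_def by (rule closure_minimal[OF _ Y_closed]) auto
  have UB: "\<Union>(range B) = Y"
  proof
    show "\<Union>(range B) \<subseteq> Y" using BY by blast
    show "Y \<subseteq> \<Union>(range B)"
    proof
      fix x assume x: "x \<in> Y"
      obtain K :: nat where "tn x \<le> real K" using real_arch_simple by blast
      then have "x \<in> {x\<in>Y. tn x \<le> real K}" using x by simp
      then have "x \<in> B K" unfolding B_def by (rule subsetD[OF closure_subset])
      then show "x \<in> \<Union>(range B)" by blast
    qed
  qed
  have "\<exists>K. X interior_of B K \<noteq> {}"
  proof (rule ccontr)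
    assume "\<not> ?thesis"
    then have "X interior_of \<Union>(range B) = {}"
      using cm BY
      by (intro Baire_category_alt) (auto simp: X_def B_def closed_subset)
    moreover have "X interior_of \<Union>(range B) = Y"
      unfolding UB X_def by (metis interior_of_topspace topspace_euclidean_subtopology)
    ultimately show False using Y_0 by blast
  qed
  then obtain K x0 where "x0 \<in> X interior_of B K" by blast
  then obtain U where U: "openin X U" "x0 \<in> U" "U \<subseteq> B K" unfolding interior_of_def by blast
  then obtain r where r: "r > 0" "\<And>x'. x' \<in> Y \<Longrightarrow> dist x' x0 < r \<Longrightarrow> x' \<in> U"
    unfolding X_def openin_euclidean_subtopology_iff by blast
  have x0: "x0 \<in> Y" using U BY by blast
  have small: "\<exists>w\<in>Y. tn w \<le> real K \<and> norm (y - w) < \<delta>"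
    if y: "y \<in> Y" "norm y < r" and d: "\<delta> > 0" for y \<delta>
  proof -
    have "x0 + y \<in> B K" using r(2)[of "x0 + y"] U(3) Y_add[OF x0 y(1)] y(2) by (auto simp: dist_norm)
    then obtain u where u: "u \<in> Y" "tn u \<le> real K" "dist u (x0 + y) < \<delta>"
      unfolding B_def closure_approachable using d by blast
    have "x0 - y \<in> B K" using r(2)[of "x0 - y"] U(3) Y_diff[OF x0 y(1)] y(2) by (auto simp: dist_norm)
    then obtain v where v: "v \<in> Y" "tn v \<le> real K" "dist v (x0 - y) < \<delta>"
      unfolding B_def closure_approachable using d by blast
    define w where "w = (1/2) *\<^sub>R u + (-1/2) *\<^sub>R v"
    have wY: "w \<in> Y" unfolding w_def by (intro Y_add Y_scale u v)
    have "tn w \<le> tn ((1/2) *\<^sub>R u) + tn ((-1/2) *\<^sub>R v)"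
      unfolding w_def by (intro tn_add Y_scale u v)
    also have "\<dots> \<le> \<bar>1/2\<bar> * tn u + \<bar>-1/2\<bar> * tn v" by (intro add_mono tn_scale u v)
    also have "\<dots> \<le> real K" using u v by simp
    finally have tw: "tn w \<le> real K" .
    have "2 *\<^sub>R (y - w) = (x0 + y - u) - (x0 - y - v)"
      unfolding w_def by (simp add: algebra_simps scaleR_2)
    then have "2 * norm (y - w) = norm ((x0 + y - u) - (x0 - y - v))"
      by (metis norm_scaleR abs_numeral)
    then have "norm (y - w) = (1/2) * norm ((x0 + y - u) - (x0 - y - v))" by simp
    also have "\<dots> \<le> (1/2) * (norm (x0 + y - u) + norm (x0 - y - v))"
      by (intro mult_left_mono norm_triangle_ineq4) auto
    also have "\<dots> < \<delta>" using u(3) v(3) by (simp add: dist_norm norm_minus_commute)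
    finally show ?thesis using wY tw by blast
  qed
  define A0 where "A0 = 2 * real K / r"
  have A0: "A0 \<ge> 0" unfolding A0_def using r by simp
  have "\<forall>y\<in>Y. \<forall>\<delta>>0. \<exists>w\<in>Y. tn w \<le> A0 * norm y \<and> norm (y - w) < \<delta>"
  proof (intro ballI allI impI)
    fix y \<delta> assume y: "y \<in> Y" and d: "(\<delta>::real) > 0"
    show "\<exists>w\<in>Y. tn w \<le> A0 * norm y \<and> norm (y - w) < \<delta>"
    proof (cases "y = 0")
      case True then show ?thesis using Y_0 tn_0 d by (intro bexI[of _ 0]) auto
    next
      case False
      define s where "s = r / (2 * norm y)"
      have s: "s > 0" unfolding s_def using r False by simp
      have ny: "norm (s *\<^sub>R y) < r" unfolding s_def using r False by simp
      obtain w' where w': "w' \<in> Y" "tn w' \<le> real K" "norm (s *\<^sub>R y - w') < \<delta> * s"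
        using small[OF Y_scale[OF y] ny] d s by (meson mult_pos_pos)
      define w where "w = (1/s) *\<^sub>R w'"
      have wY: "w \<in> Y" unfolding w_def by (rule Y_scale[OF w'(1)])
      have "tn w \<le> \<bar>1/s\<bar> * tn w'" unfolding w_def by (rule tn_scale[OF w'(1)])
      also have "\<dots> \<le> (1/s) * real K" using s w'(2) by (simp add: divide_right_mono)
      also have "\<dots> = A0 * norm y" unfolding A0_def s_def using False r by (simp add: field_simps)
      finally have tw: "tn w \<le> A0 * norm y" .
      have "y - w = (1/s) *\<^sub>R (s *\<^sub>R y - w')" unfolding w_def using s by (simp add: algebra_simps)
      then have "norm (y - w) = (1/s) * norm (s *\<^sub>R y - w')" using s by simp
      also have "\<dots> < (1/s) * (\<delta> * s)" using w'(3) s by (intro mult_strict_left_mono) auto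
      also have "\<dots> = \<delta>" using s by simp
      finally show ?thesis using wY tw by blast
    qed
  qed
  then show ?thesis using A0 by blast
qed

lemma tn_le:
  assumes enz: "\<And>i. e i \<noteq> 0"
  shows "\<exists>A>0. \<forall>y\<in>Y. tn y \<le> A * norm y"
proof -
  obtain A0 where A0: "A0 \<ge> 0" "\<forall>y\<in>Y. \<forall>\<delta>>0. \<exists>w\<in>Y. tn w \<le> A0 * norm y \<and> norm (y - w) < \<delta>"
    using approx_bound by blast
  have "\<forall>u. \<exists>w. u \<in> Y \<longrightarrow> w \<in> Y \<and> tn w \<le> A0 * norm u \<and> norm (u - w) \<le> norm u / 2"
  proof
    fix u
    show "\<exists>w. u \<in> Y \<longrightarrow> w \<in> Y \<and> tn w \<le> A0 * norm u \<and> norm (u - w) \<le> norm u / 2"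
    proof (cases "u = 0")
      case True then show ?thesis using Y_0 tn_0 by (intro exI[of _ 0]) auto
    next
      case False
      show ?thesis
      proof (cases "u \<in> Y")
        case True
        then obtain w where "w \<in> Y" "tn w \<le> A0 * norm u" "norm (u - w) < norm u / 2"
          using A0(2) False by (meson half_gt_zero zero_less_norm_iff)
        then show ?thesis by (intro exI[of _ w]) auto
      qed auto
    qed
  qed
  then obtain st where st: "\<And>u. u \<in> Y \<Longrightarrow> st u \<in> Y \<and> tn (st u) \<le> A0 * norm u \<and> norm (u - st u) \<le> norm u / 2"
    by metis
  have main: "tn y \<le> (2 * A0) * norm y" if y: "y \<in> Y" for y
  proof -
    define yy where "yy j = ((\<lambda>u. u - st u) ^^ j) y" for j
    have yyS: "yy (Suc j) = yy j - st (yy j)" for j unfolding yy_def by simp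
    have yyY: "yy j \<in> Y" for j
      by (induction j) (auto simp: yyS yy_def[of 0] y intro!: Y_diff st[THEN conjunct1])
    have yyn: "norm (yy j) \<le> norm y * (1/2)^j" for j
    proof (induction j)
      case 0 then show ?case by (simp add: yy_def)
    next
      case (Suc j)
      have "norm (yy (Suc j)) \<le> norm (yy j) / 2" unfolding yyS using st[OF yyY[of j]] by blast
      also have "\<dots> \<le> norm y * (1/2)^j / 2" using Suc by simp
      finally show ?case by simp
    qed
    define z where "z j = st (yy j)" for j
    have zY: "z j \<in> Y" for j unfolding z_def using st[OF yyY] by blast
    have psum: "(\<Sum>j<J. z j) = y - yy J" for J
      by (induction J) (auto simp: yy_def[of 0] yyS z_def)
    have yy0: "yy \<longlonglongrightarrow> 0"
    proof (rule Lim_null_comparison)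
      show "\<forall>\<^sub>F j in sequentially. norm (yy j) \<le> norm y * (1/2)^j" using yyn by simp
      show "(\<lambda>j. norm y * (1/2::real)^j) \<longlonglongrightarrow> 0"
        by (intro tendsto_mult_right_zero LIMSEQ_power_zero) auto
    qed
    have zs: "z sums y"
      unfolding sums_def psum
      using tendsto_diff[OF tendsto_const[of y] yy0] by simp
    have tz: "tn (z j) \<le> A0 * norm y * (1/2)^j" for j
    proof -
      have "tn (z j) \<le> A0 * norm (yy j)" unfolding z_def using st[OF yyY] by blast
      also have "\<dots> \<le> A0 * (norm y * (1/2)^j)" using yyn A0(1) by (intro mult_left_mono) auto
      finally show ?thesis by simp
    qed
    have gs: "summable (\<lambda>j. A0 * norm y * (1/2::real)^j)"
      by (intro summable_mult summable_geometric) auto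
    have smz: "summable (\<lambda>j. tn (z j))"
      by (rule summable_comparison_test[OF _ gs]) (use tz tn_nonneg[OF zY] in auto)
    have "tn y \<le> (\<Sum>j. tn (z j))" by (rule tn_series[OF zY smz zs y enz])
    also have "\<dots> \<le> (\<Sum>j. A0 * norm y * (1/2::real)^j)" by (rule suminf_le[OF tz smz gs])
    also have "\<dots> = A0 * norm y * 2" using suminf_geometric[of "1/2::real"] by (simp add: suminf_mult)
    finally show ?thesis by simp
  qed
  show ?thesis
  proof (intro exI conjI ballI)
    show "(2 * A0 + 1) > 0" using A0 by simp
    fix y assume y: "y \<in> Y"
    have "tn y \<le> (2 * A0) * norm y" by (rule main[OF y])
    also have "\<dots> \<le> (2 * A0 + 1) * norm y" by (intro mult_right_mono) auto
    finally show "tn y \<le> (2 * A0 + 1) * norm y" .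
  qed
qed

lemma coef_bound:
  assumes enz: "\<And>i. e i \<noteq> 0"
  shows "\<exists>A>0. \<forall>(k::nat\<Rightarrow>nat) (a::nat\<Rightarrow>real) N n. strict_mono k \<and> n < N \<longrightarrow>
           \<bar>a n\<bar> * norm (e (k n)) \<le> A * norm (\<Sum>m<N. a m *\<^sub>R e (k m))"
proof -
  obtain A where A: "A > 0" "\<forall>y\<in>Y. tn y \<le> A * norm y" using tn_le[OF enz] by blast
  have "\<bar>a n\<bar> * norm (e (k n)) \<le> (2 * A) * norm (\<Sum>m<N. a m *\<^sub>R e (k m))"
    if k: "strict_mono k" and n: "n < N" for k :: "nat \<Rightarrow> nat" and a :: "nat \<Rightarrow> real" and N n :: nat
  proof -
    have inj: "inj_on k {..<N}" unfolding inj_on_def using strict_mono_eq[OF k] by blast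
    define b where "b i = (if i \<in> k ` {..<N} then a (inv_into {..<N} k i) else 0)" for i
    have bk: "b (k m) = a m" if "m < N" for m
      unfolding b_def using that inv_into_f_f[OF inj] by auto
    have sub: "k ` {..<N} \<subseteq> {..<k N}" using k by (auto simp: strict_mono_less)
    have "(\<Sum>i<k N. b i *\<^sub>R e i) = (\<Sum>i\<in>k ` {..<N}. b i *\<^sub>R e i)"
      by (rule sum.mono_neutral_right) (use sub in \<open>auto simp: b_def\<close>)
    also have "\<dots> = (\<Sum>m<N. b (k m) *\<^sub>R e (k m))" by (rule sum.reindex[OF inj, unfolded comp_def])
    also have "\<dots> = (\<Sum>m<N. a m *\<^sub>R e (k m))" by (rule sum.cong) (auto simp: bk)
    finally have xe: "(\<Sum>m<N. a m *\<^sub>R e (k m)) = (\<Sum>i<k N. b i *\<^sub>R e i)" by simp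
    define x where "x = (\<Sum>i<k N. b i *\<^sub>R e i)"
    have xY: "x \<in> Y" unfolding x_def by (rule Y_fin)
    have "cf x (k n) = a n" unfolding x_def cf_fin using bk[OF n] sub n by auto
    then have "\<bar>a n\<bar> * norm (e (k n)) \<le> 2 * tn x" using cf_bound[OF xY, of "k n"] by simp
    also have "\<dots> \<le> 2 * (A * norm x)" using A(2) xY by simp
    finally show ?thesis unfolding xe x_def by simp
  qed
  then show ?thesis using A(1) by (intro exI[of _ "2 * A"]) auto
qed


end
lemma sum_shift_zero:
  fixes g :: "nat \<Rightarrow> 'a::comm_monoid_add"
  assumes "\<And>n. n < T \<Longrightarrow> g n = 0"
  shows "(\<Sum>n<T+M. g n) = (\<Sum>i<M. g (i+T))"
proof -
  have eq: "{..<T+M} = {..<T} \<union> {T..<T+M}" by auto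
  have "(\<Sum>n<T+M. g n) = (\<Sum>n\<in>{..<T} \<union> {T..<T+M}. g n)" by (simp only: eq)
  also have "\<dots> = (\<Sum>n<T. g n) + (\<Sum>n\<in>{T..<T+M}. g n)"
    by (rule sum.union_disjoint) auto
  also have "(\<Sum>n<T. g n) = 0" using assms by simp
  also have "(\<Sum>n\<in>{T..<T+M}. g n) = (\<Sum>i\<in>{0..<M}. g (i+T))"
    using sum.shift_bounds_nat_ivl[of g 0 T M] by (simp add: add.commute)
  finally show ?thesis by (simp add: atLeast0LessThan)
qed

primrec Pseq :: "(nat \<Rightarrow> nat \<Rightarrow> nat) \<Rightarrow> nat \<Rightarrow> nat" where
  "Pseq g 0 = 0" | "Pseq g (Suc j) = g (Pseq g j) j"

primrec Tseq :: "(nat \<Rightarrow> nat) \<Rightarrow> nat \<Rightarrow> nat" where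
  "Tseq M 0 = 0" | "Tseq M (Suc j) = Tseq M j + M j"

lemma blk_unique:
  assumes M: "\<And>j. M j > 0"
  shows "\<exists>!j. Tseq M j \<le> n \<and> n < Tseq M (Suc j)"
proof -
  have sm: "strict_mono (Tseq M)" unfolding strict_mono_Suc_iff using M by simp
  have ge: "Tseq M j \<ge> j" for j using sm by (rule strict_mono_imp_increasing)
  define j where "j = (LEAST j. n < Tseq M (Suc j))"
  have ex: "n < Tseq M (Suc n)" using ge[of "Suc n"] by simp
  have j1: "n < Tseq M (Suc j)" unfolding j_def by (rule LeastI[where P="\<lambda>j. n < Tseq M (Suc j)", OF ex])
  have j2: "Tseq M j \<le> n"
  proof (cases j)
    case (Suc j')
    have "\<not> n < Tseq M (Suc j')" using Suc unfolding j_def by (metis lessI not_less_Least)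
    then show ?thesis using Suc by simp
  qed simp
  show ?thesis
  proof (rule ex1I[of _ j])
    show "Tseq M j \<le> n \<and> n < Tseq M (Suc j)" using j1 j2 by simp
    fix j' assume j': "Tseq M j' \<le> n \<and> n < Tseq M (Suc j')"
    show "j' = j"
    proof (rule ccontr)
      assume "j' \<noteq> j"
      then consider "Suc j' \<le> j" | "Suc j \<le> j'" by linarith
      then show False
      proof cases
        case 1 then have "Tseq M (Suc j') \<le> Tseq M j" using strict_mono_less_eq[OF sm] by blast
        then show False using j' j2 by simp
      next
        case 2 then have "Tseq M (Suc j) \<le> Tseq M j'" using strict_mono_less_eq[OF sm] by blast
        then show False using j' j1 by simp
      qed
    qed
  qed
qed

lemma stepA:
  fixes e :: "nat \<Rightarrow> 'a::real_normed_vector"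
  assumes qs: "\<forall>k l::nat \<Rightarrow> nat. strict_mono k \<and> strict_mono l \<and> (\<forall>n. k n \<le> l n) \<longrightarrow>
        dominates (e \<circ> k) (e \<circ> l)"
  shows "\<exists>p C. C > 0 \<and> (\<forall>k l::nat \<Rightarrow> nat. strict_mono k \<and> strict_mono l \<and> (\<forall>n. k n \<le> l n) \<and> p < k 0 \<longrightarrow>
           (\<forall>(a::nat \<Rightarrow> real) N. norm (\<Sum>n<N. a n *\<^sub>R e (l n)) \<le> C * norm (\<Sum>n<N. a n *\<^sub>R e (k n))))"
proof (rule ccontr)
  assume neg: "\<not> ?thesis"
  have ex: "\<exists>(k::nat\<Rightarrow>nat) (l::nat\<Rightarrow>nat) (a::nat\<Rightarrow>real) (N::nat). (strict_mono k \<and> strict_mono l \<and> (\<forall>n. k n \<le> l n) \<and> p < k 0) \<and>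
      norm (\<Sum>n<N. a n *\<^sub>R e (l n)) > (real j + 1) * norm (\<Sum>n<N. a n *\<^sub>R e (k n))" for p j
  proof (rule ccontr)
    assume neg2: "\<not> ?thesis"
    have "real j + 1 > 0 \<and> (\<forall>k l::nat \<Rightarrow> nat. strict_mono k \<and> strict_mono l \<and> (\<forall>n. k n \<le> l n) \<and> p < k 0 \<longrightarrow>
           (\<forall>(a::nat \<Rightarrow> real) N. norm (\<Sum>n<N. a n *\<^sub>R e (l n)) \<le> (real j + 1) * norm (\<Sum>n<N. a n *\<^sub>R e (k n))))"
    proof (intro conjI allI impI)
      fix k l :: "nat \<Rightarrow> nat" and a :: "nat \<Rightarrow> real" and N :: nat
      assume v: "strict_mono k \<and> strict_mono l \<and> (\<forall>n. k n \<le> l n) \<and> p < k 0"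
      show "norm (\<Sum>n<N. a n *\<^sub>R e (l n)) \<le> (real j + 1) * norm (\<Sum>n<N. a n *\<^sub>R e (k n))"
      proof (rule ccontr)
        assume "\<not> ?thesis"
        then have "norm (\<Sum>n<N. a n *\<^sub>R e (l n)) > (real j + 1) * norm (\<Sum>n<N. a n *\<^sub>R e (k n))"
          by (simp only: not_le)
        with v have "\<exists>(k::nat\<Rightarrow>nat) (l::nat\<Rightarrow>nat) (a::nat\<Rightarrow>real) (N::nat). (strict_mono k \<and> strict_mono l \<and> (\<forall>n. k n \<le> l n) \<and> p < k 0) \<and>
          norm (\<Sum>n<N. a n *\<^sub>R e (l n)) > (real j + 1) * norm (\<Sum>n<N. a n *\<^sub>R e (k n))"
          by blast
        with neg2 show False by (rule notE)
      qed
    qed simp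
    then have "\<exists>p C. C > 0 \<and> (\<forall>k l::nat \<Rightarrow> nat. strict_mono k \<and> strict_mono l \<and> (\<forall>n. k n \<le> l n) \<and> p < k 0 \<longrightarrow>
           (\<forall>(a::nat \<Rightarrow> real) N. norm (\<Sum>n<N. a n *\<^sub>R e (l n)) \<le> C * norm (\<Sum>n<N. a n *\<^sub>R e (k n))))"
      by blast
    with neg show False by (rule notE)
  qed
  define F where "F p j = (SOME q::(nat\<Rightarrow>nat)\<times>(nat\<Rightarrow>nat)\<times>(nat\<Rightarrow>real)\<times>nat. (strict_mono (fst q) \<and> strict_mono (fst (snd q)) \<and> (\<forall>n. fst q n \<le> fst (snd q) n) \<and> p < fst q 0) \<and>
      norm (\<Sum>n<snd (snd (snd q)). fst (snd (snd q)) n *\<^sub>R e (fst (snd q) n)) > (real j + 1) * norm (\<Sum>n<snd (snd (snd q)). fst (snd (snd q)) n *\<^sub>R e (fst q n)))" for p j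
  define fk where "fk p j = fst (F p j)" for p j
  define fl where "fl p j = fst (snd (F p j))" for p j
  define fa where "fa p j = fst (snd (snd (F p j)))" for p j
  define fN where "fN p j = snd (snd (snd (F p j)))" for p j
  have f: "(strict_mono (fk p j) \<and> strict_mono (fl p j) \<and> (\<forall>n. fk p j n \<le> fl p j n) \<and> p < fk p j 0) \<and>
      norm (\<Sum>n<fN p j. fa p j n *\<^sub>R e (fl p j n)) > (real j + 1) * norm (\<Sum>n<fN p j. fa p j n *\<^sub>R e (fk p j n))" for p j
  proof -
    obtain k l :: "nat \<Rightarrow> nat" and a :: "nat \<Rightarrow> real" and N :: nat where "(strict_mono k \<and> strict_mono l \<and> (\<forall>n. k n \<le> l n) \<and> p < k 0) \<and>
      norm (\<Sum>n<N. a n *\<^sub>R e (l n)) > (real j + 1) * norm (\<Sum>n<N. a n *\<^sub>R e (k n))"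
      using ex[of p j] by blast
    then have "\<exists>q::(nat\<Rightarrow>nat)\<times>(nat\<Rightarrow>nat)\<times>(nat\<Rightarrow>real)\<times>nat. (strict_mono (fst q) \<and> strict_mono (fst (snd q)) \<and> (\<forall>n. fst q n \<le> fst (snd q) n) \<and> p < fst q 0) \<and>
      norm (\<Sum>n<snd (snd (snd q)). fst (snd (snd q)) n *\<^sub>R e (fst (snd q) n)) > (real j + 1) * norm (\<Sum>n<snd (snd (snd q)). fst (snd (snd q)) n *\<^sub>R e (fst q n))"
      by (intro exI[of _ "(k, l, a, N)"]) simp
    then show ?thesis unfolding fk_def fl_def fa_def fN_def F_def by (rule someI_ex)
  qed
  define g where "g p j = fl p j (fN p j)" for p j
  define Pj where "Pj = Pseq g"
  define kk where "kk j = fk (Pj j) j" for j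
  define ll where "ll j = fl (Pj j) j" for j
  define aa where "aa j = fa (Pj j) j" for j
  define M where "M j = fN (Pj j) j" for j
  have kk: "strict_mono (kk j)" "strict_mono (ll j)" "\<And>n. kk j n \<le> ll j n" "Pj j < kk j 0"
    and viol: "norm (\<Sum>n<M j. aa j n *\<^sub>R e (ll j n)) > (real j + 1) * norm (\<Sum>n<M j. aa j n *\<^sub>R e (kk j n))" for j
    using f[of "Pj j" j] unfolding kk_def ll_def aa_def M_def by auto
  have PS: "Pj (Suc j) = ll j (M j)" for j unfolding Pj_def ll_def M_def g_def by simp
  have Mpos: "M j > 0" for j
  proof (rule ccontr)
    assume "\<not> M j > 0" then have "M j = 0" by simp
    then show False using viol[of j] by simp
  qed
  define T where "T = Tseq M"
  have TS: "T (Suc j) = T j + M j" for j unfolding T_def by simp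
  define blk where "blk n = (THE j. T j \<le> n \<and> n < T (Suc j))" for n
  have blk: "T (blk n) \<le> n \<and> n < T (Suc (blk n))" for n
    unfolding blk_def T_def using theI'[OF blk_unique[of M n, OF Mpos]] by blast
  have blk_eq: "T j \<le> n \<Longrightarrow> n < T (Suc j) \<Longrightarrow> blk n = j" for j n
    using blk_unique[of M n, OF Mpos] blk[of n] unfolding T_def by blast
  define K where "K n = kk (blk n) (n - T (blk n))" for n
  define L where "L n = ll (blk n) (n - T (blk n))" for n
  have KL: "K n \<le> L n" for n unfolding K_def L_def using kk(3) by blast
  have step: "K n < K (Suc n) \<and> L n < L (Suc n)" for n
  proof -
    define j where "j = blk n"
    define i where "i = n - T j"
    have ij: "n = T j + i" "i < M j" using blk[of n] TS[of j] unfolding j_def i_def by auto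
    show ?thesis
    proof (cases "Suc n < T (Suc j)")
      case True
      then have "blk (Suc n) = j" using ij by (intro blk_eq) auto
      then have "K (Suc n) = kk j (Suc i)" "L (Suc n) = ll j (Suc i)" "K n = kk j i" "L n = ll j i"
        unfolding K_def L_def j_def[symmetric] using ij by (auto simp: Suc_diff_le)
      then show ?thesis using kk(1,2)[of j] by (simp add: strict_mono_def)
    next
      case False
      then have sn: "Suc n = T (Suc j)" using ij TS by simp
      then have "blk (Suc n) = Suc j" using TS[of "Suc j"] Mpos[of "Suc j"] by (intro blk_eq) auto
      then have KS: "K (Suc n) = kk (Suc j) 0" "L (Suc n) = ll (Suc j) 0" unfolding K_def L_def using sn by auto
      have Kn: "K n = kk j i" "L n = ll j i" unfolding K_def L_def j_def[symmetric] i_def by auto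
      have "ll j i < ll j (M j)" using kk(2)[of j] ij(2) by (simp add: strict_mono_less)
      also have "\<dots> = Pj (Suc j)" by (simp add: PS)
      also have "\<dots> < kk (Suc j) 0" by (rule kk(4))
      finally have lt: "ll j i < kk (Suc j) 0" .
      then show ?thesis using KS Kn kk(3)[of j i] kk(3)[of "Suc j" 0] by simp
    qed
  qed
  have smK: "strict_mono K" and smL: "strict_mono L" unfolding strict_mono_Suc_iff using step by auto
  have "dominates (e \<circ> K) (e \<circ> L)" using qs smK smL KL by blast
  then obtain C where C: "C > 0" "\<And>a N. norm (\<Sum>n<N. a n *\<^sub>R e (L n)) \<le> C * norm (\<Sum>n<N. a n *\<^sub>R e (K n))"
    unfolding dominates_def dominates_with_def by auto
  obtain j :: nat where jC: "C \<le> real j" using real_arch_simple by blast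
  define \<alpha> where "\<alpha> n = (if T j \<le> n then aa j (n - T j) else 0)" for n
  have inblk: "blk (i + T j) = j" if "i < M j" for i using that TS by (intro blk_eq) auto
  have sL: "(\<Sum>n<T (Suc j). \<alpha> n *\<^sub>R e (L n)) = (\<Sum>i<M j. aa j i *\<^sub>R e (ll j i))"
    unfolding TS by (subst sum_shift_zero) (auto simp: \<alpha>_def L_def inblk intro!: sum.cong)
  have sK: "(\<Sum>n<T (Suc j). \<alpha> n *\<^sub>R e (K n)) = (\<Sum>i<M j. aa j i *\<^sub>R e (kk j i))"
    unfolding TS by (subst sum_shift_zero) (auto simp: \<alpha>_def K_def inblk intro!: sum.cong)
  have "norm (\<Sum>i<M j. aa j i *\<^sub>R e (ll j i)) \<le> C * norm (\<Sum>i<M j. aa j i *\<^sub>R e (kk j i))"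
    using C(2)[of \<alpha> "T (Suc j)"] sK sL by simp
  also have "\<dots> \<le> (real j + 1) * norm (\<Sum>i<M j. aa j i *\<^sub>R e (kk j i))"
    using jC by (intro mult_right_mono) auto
  finally show False using viol[of j] by simp
qed

lemma sum_split_shift:
  fixes f :: "nat \<Rightarrow> 'a::comm_monoid_add"
  shows "(\<Sum>n<h+M. f n) = (\<Sum>n<h. f n) + (\<Sum>i<M. f (i+h))"
proof -
  have eq: "{..<h+M} = {..<h} \<union> {h..<h+M}" by auto
  have "(\<Sum>n<h+M. f n) = (\<Sum>n\<in>{..<h} \<union> {h..<h+M}. f n)" by (simp only: eq)
  also have "\<dots> = (\<Sum>n<h. f n) + (\<Sum>n\<in>{h..<h+M}. f n)"
    by (rule sum.union_disjoint) auto
  also have "(\<Sum>n\<in>{h..<h+M}. f n) = (\<Sum>i\<in>{0..<M}. f (i+h))"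
    using sum.shift_bounds_nat_ivl[of f 0 h M] by (simp add: add.commute)
  finally show ?thesis by (simp add: atLeast0LessThan)
qed

lemma head_bound:
  fixes e :: "nat \<Rightarrow> 'a::real_normed_vector"
  assumes "\<And>n. n < H \<Longrightarrow> \<bar>a n\<bar> \<le> D" "\<And>i. norm (e i) \<le> E" "0 \<le> E"
  shows "norm (\<Sum>n<H. a n *\<^sub>R e (m n)) \<le> real H * (D * E)"
proof -
  have "norm (\<Sum>n<H. a n *\<^sub>R e (m n)) \<le> (\<Sum>n<H. norm (a n *\<^sub>R e (m n)))" by (rule norm_sum)
  also have "\<dots> \<le> (\<Sum>n<H. D * E)"
  proof (rule sum_mono)
    fix n assume "n \<in> {..<H}"
    then have an: "\<bar>a n\<bar> \<le> D" using assms(1) by simp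
    have "0 \<le> D" using an abs_ge_zero order_trans by blast
    then show "norm (a n *\<^sub>R e (m n)) \<le> D * E"
      using an assms(2)[of "m n"] by (simp add: mult_mono)
  qed
  finally show ?thesis by simp
qed

theorem lemma2p2:
  fixes e :: "nat \<Rightarrow> 'a::banach"
  assumes "basic_sequence e" and "seminormalized e" and "quasisubsymmetric e"
  shows "\<exists>S>0. \<forall>k l::nat \<Rightarrow> nat. strict_mono k \<and> strict_mono l \<and> (\<forall>n. k n \<le> l n) \<longrightarrow>
           (\<forall>(a::nat \<Rightarrow> real) N. norm (\<Sum>n<N. a n *\<^sub>R e (l n)) \<le> S * norm (\<Sum>n<N. a n *\<^sub>R e (k n)))"
proof -
  interpret bseq e using assms(1) by unfold_locales
  define d0 where "d0 = (INF n. norm (e n))"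
  have d0: "d0 > 0" using assms(2) unfolding seminormalized_def d0_def by simp
  have ge: "d0 \<le> norm (e i)" for i
    unfolding d0_def by (rule cINF_lower) (auto intro: bdd_belowI[of _ 0])
  obtain E where E: "\<And>i. norm (e i) \<le> E"
    using assms(2) unfolding seminormalized_def bdd_above_def by auto
  have E0: "0 \<le> E" using E[of 0] norm_ge_zero order_trans by blast
  have enz: "e i \<noteq> 0" for i using ge[of i] d0 by auto
  obtain A where A: "A > 0" "\<And>(k::nat\<Rightarrow>nat) (a::nat\<Rightarrow>real) (N::nat) (n::nat). strict_mono k \<Longrightarrow> n < N \<Longrightarrow>
           \<bar>a n\<bar> * norm (e (k n)) \<le> A * norm (\<Sum>m<N. a m *\<^sub>R e (k m))"
    using coef_bound[OF enz] by blast
  obtain p C where C: "C > 0" "\<And>(k::nat\<Rightarrow>nat) (l::nat\<Rightarrow>nat) (a::nat\<Rightarrow>real) (N::nat). strict_mono k \<Longrightarrow> strict_mono l \<Longrightarrow> (\<forall>n. k n \<le> l n) \<Longrightarrow> p < k 0 \<Longrightarrow>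
     norm (\<Sum>n<N. a n *\<^sub>R e (l n)) \<le> C * norm (\<Sum>n<N. a n *\<^sub>R e (k n))"
    using stepA[of e] assms(3) unfolding quasisubsymmetric_def by blast
  define D where "D = A / d0 * E"
  have D0: "D \<ge> 0" unfolding D_def using A d0 E0 by simp
  define S where "S = real (Suc p) * D + C * (1 + real (Suc p) * D)"
  have h0: "0 \<le> real (Suc p) * D" using D0 by simp
  have c1: "0 < C * (1 + real (Suc p) * D)"
    using C(1) h0 by (intro mult_pos_pos) linarith+
  have S0: "S > 0" unfolding S_def using h0 c1 by linarith
  have main: "norm (\<Sum>n<N. a n *\<^sub>R e (l n)) \<le> S * norm (\<Sum>n<N. a n *\<^sub>R e (k n))"
    if k: "strict_mono k" and l: "strict_mono l" and kl: "\<forall>n. k n \<le> l n" for k l :: "nat \<Rightarrow> nat" and a :: "nat \<Rightarrow> real" and N :: nat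
  proof -
    define X where "X = norm (\<Sum>n<N. a n *\<^sub>R e (k n))"
    have X0: "X \<ge> 0" unfolding X_def by simp
    have coef: "\<bar>a n\<bar> \<le> A / d0 * X" if "n < N" for n
    proof -
      have "\<bar>a n\<bar> * d0 \<le> \<bar>a n\<bar> * norm (e (k n))" using ge by (intro mult_left_mono) auto
      also have "\<dots> \<le> A * X" unfolding X_def by (rule A(2)[OF k that])
      finally show ?thesis using d0 by (simp add: field_simps)
    qed
    have hb: "norm (\<Sum>n<H. a n *\<^sub>R e (m n)) \<le> real H * (D * X)" if "H \<le> N" for H and m :: "nat \<Rightarrow> nat"
      using head_bound[of H a "A / d0 * X" e E m] coef that E E0 unfolding D_def
      by (simp add: mult_ac)
    have exh: "p < k (Suc p)" using strict_mono_imp_increasing[OF k, of "Suc p"] by simp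
    define h where "h = (LEAST n. p < k n)"
    have h1: "p < k h" unfolding h_def by (rule LeastI[where P="\<lambda>n. p < k n", OF exh])
    have h2: "h \<le> Suc p" unfolding h_def by (rule Least_le[where P="\<lambda>n. p < k n", OF exh])
    have SX: "real (Suc p) * D * X \<le> S * X"
      unfolding S_def using C D0 X0 by (intro mult_right_mono) (auto simp: add_nonneg_nonneg)
    show ?thesis
    proof (cases "N \<le> h")
      case True
      have "norm (\<Sum>n<N. a n *\<^sub>R e (l n)) \<le> real N * (D * X)" by (rule hb) simp
      also have "\<dots> \<le> real (Suc p) * (D * X)" using True h2 D0 X0 by (intro mult_right_mono) auto
      also have "\<dots> \<le> S * X" using SX by (simp add: mult_ac)
      finally show ?thesis unfolding X_def .
    next
      case False
      then obtain M where NM: "N = h + M" by (metis le_add_diff_inverse nat_le_linear)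
      have hN: "h \<le> N" using NM by simp
      define k' where "k' i = k (i + h)" for i
      define l' where "l' i = l (i + h)" for i
      have k': "strict_mono k'" using k unfolding k'_def strict_mono_def by simp
      have l': "strict_mono l'" using l unfolding l'_def strict_mono_def by simp
      have tail: "norm (\<Sum>i<M. a (i+h) *\<^sub>R e (l' i)) \<le> C * norm (\<Sum>i<M. a (i+h) *\<^sub>R e (k' i))"
        by (rule C(2)[OF k' l']) (use kl h1 in \<open>auto simp: k'_def l'_def\<close>)
      have xs: "(\<Sum>n<N. a n *\<^sub>R e (k n)) = (\<Sum>n<h. a n *\<^sub>R e (k n)) + (\<Sum>i<M. a (i+h) *\<^sub>R e (k' i))"
        unfolding NM k'_def by (rule sum_split_shift)
      have ys: "(\<Sum>n<N. a n *\<^sub>R e (l n)) = (\<Sum>n<h. a n *\<^sub>R e (l n)) + (\<Sum>i<M. a (i+h) *\<^sub>R e (l' i))"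
        unfolding NM l'_def by (rule sum_split_shift)
      have tk: "norm (\<Sum>i<M. a (i+h) *\<^sub>R e (k' i)) \<le> X + real h * (D * X)"
      proof -
        have "(\<Sum>i<M. a (i+h) *\<^sub>R e (k' i)) = (\<Sum>n<N. a n *\<^sub>R e (k n)) - (\<Sum>n<h. a n *\<^sub>R e (k n))"
          using xs by simp
        then have "norm (\<Sum>i<M. a (i+h) *\<^sub>R e (k' i)) \<le> X + norm (\<Sum>n<h. a n *\<^sub>R e (k n))"
          unfolding X_def by (metis norm_triangle_ineq4)
        then show ?thesis using hb[OF hN, of k] by simp
      qed
      have "norm (\<Sum>n<N. a n *\<^sub>R e (l n)) \<le> norm (\<Sum>n<h. a n *\<^sub>R e (l n)) + norm (\<Sum>i<M. a (i+h) *\<^sub>R e (l' i))"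
        unfolding ys by (rule norm_triangle_ineq)
      also have "\<dots> \<le> real h * (D * X) + C * (X + real h * (D * X))"
        using hb[OF hN, of l] tail tk C(1) by (smt (verit) mult_left_mono)
      also have "\<dots> \<le> real (Suc p) * (D * X) + C * (X + real (Suc p) * (D * X))"
      proof -
        have "real h * (D * X) \<le> real (Suc p) * (D * X)" using h2 D0 X0 by (intro mult_right_mono) auto
        then show ?thesis using C(1) by (smt (verit) mult_left_mono)
      qed
      also have "\<dots> = S * X" unfolding S_def by (simp add: algebra_simps)
      finally show ?thesis unfolding X_def .
    qed
  qed
  show ?thesis using S0 main by blast
qed


end
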